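(* Let $L$ be a finite extension of $\mathbb{Z}_\mathrm{max}$. Then $\mathrm{ui}(L/\mathbb{Z}_\mathrm{max})<\infty$.
   Context: A semifield is a commutative semiring (both operations commutative monoids, distributive law) in which every nonzero element is a unit. $\mathbb{Z}_\mathrm{max}=\mathbb{Z}\cup\{-\infty\}$ is the semifield with addition $\max$ and multiplication ordinary addition. An extension of a semifield $K$ is a semifield $L$ with an injective homomorphism $K\to L$; it is finite if $L$ is thereby a finitely generated $K$-semimodule. The unit index is $\mathrm{ui}(L/K)=|L^\times/K^\times|$, where $L^\times$ is the group of units of $L$ and $K^\times$ is identified with its image. *)

theory Defs
  imports Main
begin

definition semifield ::
  "'a set \<Rightarrow> ('a \<Rightarrow> 'a \<Rightarrow> 'a) \<Rightarrow> ('a \<Rightarrow> 'a \<Rightarrow> 'a) \<Rightarrow> 'a \<Rightarrow> 'a \<Rightarrow> bool" where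
  "semifield S add mul z u \<longleftrightarrow>
     z \<in> S \<and> u \<in> S \<and> z \<noteq> u \<and>
     (\<forall>x\<in>S. \<forall>y\<in>S. add x y \<in> S \<and> mul x y \<in> S) \<and>
     (\<forall>x\<in>S. \<forall>y\<in>S. \<forall>w\<in>S. add (add x y) w = add x (add y w)) \<and>
     (\<forall>x\<in>S. \<forall>y\<in>S. add x y = add y x) \<and>
     (\<forall>x\<in>S. add z x = x) \<and>
     (\<forall>x\<in>S. \<forall>y\<in>S. \<forall>w\<in>S. mul (mul x y) w = mul x (mul y w)) \<and>
     (\<forall>x\<in>S. \<forall>y\<in>S. mul x y = mul y x) \<and>
     (\<forall>x\<in>S. mul u x = x) \<and>
     (\<forall>x\<in>S. \<forall>y\<in>S. \<forall>w\<in>S. mul x (add y w) = add (mul x y) (mul x w)) \<and>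
     (\<forall>x\<in>S. mul z x = z) \<and>
     (\<forall>x\<in>S. x \<noteq> z \<longrightarrow> (\<exists>y\<in>S. mul x y = u))"

definition units_of_sf :: "'a set \<Rightarrow> ('a \<Rightarrow> 'a \<Rightarrow> 'a) \<Rightarrow> 'a \<Rightarrow> 'a set" where
  "units_of_sf S mul u = {x \<in> S. \<exists>y\<in>S. mul x y = u}"

text \<open>The semifield Z_max = Z with -infinity; -infinity is represented by None.\<close>

type_synonym zmax = "int option"

definition zmax_carrier :: "zmax set" where "zmax_carrier = UNIV"

fun zmax_add :: "zmax \<Rightarrow> zmax \<Rightarrow> zmax" where
  "zmax_add None y = y"
| "zmax_add x None = x"
| "zmax_add (Some a) (Some b) = Some (max a b)"

fun zmax_mul :: "zmax \<Rightarrow> zmax \<Rightarrow> zmax" where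
  "zmax_mul (Some a) (Some b) = Some (a + b)"
| "zmax_mul _ _ = None"

definition zmax_zero :: zmax where "zmax_zero = None"
definition zmax_one :: zmax where "zmax_one = Some 0"

definition sf_hom ::
  "'a set \<Rightarrow> ('a \<Rightarrow> 'a \<Rightarrow> 'a) \<Rightarrow> ('a \<Rightarrow> 'a \<Rightarrow> 'a) \<Rightarrow> 'a \<Rightarrow> 'a \<Rightarrow>
   'b set \<Rightarrow> ('b \<Rightarrow> 'b \<Rightarrow> 'b) \<Rightarrow> ('b \<Rightarrow> 'b \<Rightarrow> 'b) \<Rightarrow> 'b \<Rightarrow> 'b \<Rightarrow>
   ('a \<Rightarrow> 'b) \<Rightarrow> bool" where
  "sf_hom K addK mulK zK uK L addL mulL zL uL f \<longleftrightarrow>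
     (\<forall>x\<in>K. f x \<in> L) \<and>
     (\<forall>x\<in>K. \<forall>y\<in>K. f (addK x y) = addL (f x) (f y)) \<and>
     (\<forall>x\<in>K. \<forall>y\<in>K. f (mulK x y) = mulL (f x) (f y)) \<and>
     f zK = zL \<and> f uK = uL"

definition lin_comb ::
  "('b \<Rightarrow> 'b \<Rightarrow> 'b) \<Rightarrow> ('b \<Rightarrow> 'b \<Rightarrow> 'b) \<Rightarrow> 'b \<Rightarrow> ('a \<Rightarrow> 'b) \<Rightarrow> 'a list \<Rightarrow> 'b list \<Rightarrow> 'b" where
  "lin_comb addL mulL zL f cs gs =
     foldr (\<lambda>(c, g) acc. addL (mulL (f c) g) acc) (zip cs gs) zL"

definition fin_gen_semimodule ::
  "'a set \<Rightarrow> 'b set \<Rightarrow> ('b \<Rightarrow> 'b \<Rightarrow> 'b) \<Rightarrow> ('b \<Rightarrow> 'b \<Rightarrow> 'b) \<Rightarrow> 'b \<Rightarrow> ('a \<Rightarrow> 'b) \<Rightarrow> bool" where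
  "fin_gen_semimodule K L addL mulL zL f \<longleftrightarrow>
     (\<exists>gs. set gs \<subseteq> L \<and>
        (\<forall>x\<in>L. \<exists>cs. length cs = length gs \<and> set cs \<subseteq> K \<and>
                    x = lin_comb addL mulL zL f cs gs))"

text \<open>The unit index |L^x / K^x|: the set of cosets x K^x for x \<in> L^x.\<close>

definition unit_cosets ::
  "'a set \<Rightarrow> ('a \<Rightarrow> 'a \<Rightarrow> 'a) \<Rightarrow> 'a \<Rightarrow> 'b set \<Rightarrow> ('b \<Rightarrow> 'b \<Rightarrow> 'b) \<Rightarrow> 'b \<Rightarrow> ('a \<Rightarrow> 'b) \<Rightarrow> 'b set set" where
  "unit_cosets K mulK uK L mulL uL f =
     (\<lambda>x. (\<lambda>k. mulL x (f k)) ` units_of_sf K mulK uK) ` units_of_sf L mulL uL"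

end

theory Submission imports Defs begin

locale isf =
  fixes L :: "'a set" and addL mulL :: "'a \<Rightarrow> 'a \<Rightarrow> 'a" and zL uL :: 'a
    and f :: "zmax \<Rightarrow> 'a"
  assumes sf: "semifield L addL mulL zL uL"
    and hom: "sf_hom zmax_carrier zmax_add zmax_mul zmax_zero zmax_one L addL mulL zL uL f"
begin

lemma z: "zL \<in> L" and u: "uL \<in> L" and zu: "zL \<noteq> uL"
  and add_cl: "\<And>x y. x \<in> L \<Longrightarrow> y \<in> L \<Longrightarrow> addL x y \<in> L"
  and mul_cl: "\<And>x y. x \<in> L \<Longrightarrow> y \<in> L \<Longrightarrow> mulL x y \<in> L"
  and add_assoc: "\<And>x y w. x \<in> L \<Longrightarrow> y \<in> L \<Longrightarrow> w \<in> L \<Longrightarrow> addL (addL x y) w = addL x (addL y w)"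
  and add_comm: "\<And>x y. x \<in> L \<Longrightarrow> y \<in> L \<Longrightarrow> addL x y = addL y x"
  and add_z: "\<And>x. x \<in> L \<Longrightarrow> addL zL x = x"
  and mul_assoc: "\<And>x y w. x \<in> L \<Longrightarrow> y \<in> L \<Longrightarrow> w \<in> L \<Longrightarrow> mulL (mulL x y) w = mulL x (mulL y w)"
  and mul_comm: "\<And>x y. x \<in> L \<Longrightarrow> y \<in> L \<Longrightarrow> mulL x y = mulL y x"
  and mul_u: "\<And>x. x \<in> L \<Longrightarrow> mulL uL x = x"
  and distr: "\<And>x y w. x \<in> L \<Longrightarrow> y \<in> L \<Longrightarrow> w \<in> L \<Longrightarrow> mulL x (addL y w) = addL (mulL x y) (mulL x w)"
  and mul_z: "\<And>x. x \<in> L \<Longrightarrow> mulL zL x = zL"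
  and inv: "\<And>x. x \<in> L \<Longrightarrow> x \<noteq> zL \<Longrightarrow> \<exists>y\<in>L. mulL x y = uL"
  using sf unfolding semifield_def by blast+

lemma mul_z2: "x \<in> L \<Longrightarrow> mulL x zL = zL"
  using mul_comm mul_z z by metis

lemma f_in: "f x \<in> L" and f_add: "f (zmax_add x y) = addL (f x) (f y)"
  and f_mul: "f (zmax_mul x y) = mulL (f x) (f y)"
  and f_None: "f None = zL" and f_one: "f (Some 0) = uL"
  using hom unfolding sf_hom_def zmax_carrier_def zmax_zero_def zmax_one_def by auto

definition p :: "int \<Rightarrow> 'a" where "p k = f (Some k)"

lemma p_in: "p k \<in> L" by (simp add: p_def f_in)
lemma p_mul: "p (a + b) = mulL (p a) (p b)"
  using f_mul[of "Some a" "Some b"] by (simp add: p_def)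
lemma p_0: "p 0 = uL" by (simp add: p_def f_one)

definition le :: "'a \<Rightarrow> 'a \<Rightarrow> bool" where "le a b \<longleftrightarrow> addL a b = b"

lemma idem: "x \<in> L \<Longrightarrow> addL x x = x"
proof -
  assume x: "x \<in> L"
  have uu: "addL uL uL = uL" using f_add[of "Some 0" "Some 0"] by (simp add: f_one)
  have "addL x x = addL (mulL x uL) (mulL x uL)" using mul_comm mul_u x u by metis
  also have "\<dots> = mulL x (addL uL uL)" using distr x u by metis
  finally show ?thesis using uu mul_comm mul_u x u by metis
qed

lemma le_refl: "x \<in> L \<Longrightarrow> le x x" by (simp add: le_def idem)
lemma le_trans: "x \<in> L \<Longrightarrow> y \<in> L \<Longrightarrow> w \<in> L \<Longrightarrow> le x y \<Longrightarrow> le y w \<Longrightarrow> le x w"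
  unfolding le_def by (metis add_assoc)
lemma le_antisym: "x \<in> L \<Longrightarrow> y \<in> L \<Longrightarrow> le x y \<Longrightarrow> le y x \<Longrightarrow> x = y"
  unfolding le_def by (metis add_comm)
lemma le_z: "x \<in> L \<Longrightarrow> le zL x" by (simp add: le_def add_z)
lemma le_add1: "x \<in> L \<Longrightarrow> y \<in> L \<Longrightarrow> le x (addL x y)"
  unfolding le_def by (metis add_assoc idem)
lemma le_add2: "x \<in> L \<Longrightarrow> y \<in> L \<Longrightarrow> le y (addL x y)"
  by (metis add_comm le_add1)
lemma le_addI: "x \<in> L \<Longrightarrow> y \<in> L \<Longrightarrow> w \<in> L \<Longrightarrow> le x w \<Longrightarrow> le y w \<Longrightarrow> le (addL x y) w"
  unfolding le_def by (metis add_assoc)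
lemma le_mul: "m \<in> L \<Longrightarrow> x \<in> L \<Longrightarrow> y \<in> L \<Longrightarrow> le x y \<Longrightarrow> le (mulL m x) (mulL m y)"
  unfolding le_def by (metis distr)
lemma le_addmono: "x \<in> L \<Longrightarrow> y \<in> L \<Longrightarrow> x' \<in> L \<Longrightarrow> y' \<in> L \<Longrightarrow> le x x' \<Longrightarrow> le y y' \<Longrightarrow> le (addL x y) (addL x' y')"
  by (meson add_cl le_add1 le_add2 le_addI le_trans)

lemma p_mono: "a \<le> b \<Longrightarrow> le (p a) (p b)"
  using f_add[of "Some a" "Some b"] by (simp add: p_def le_def max_def)

lemma mul_nz: "x \<in> L \<Longrightarrow> y \<in> L \<Longrightarrow> x \<noteq> zL \<Longrightarrow> y \<noteq> zL \<Longrightarrow> mulL x y \<noteq> zL"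
proof
  assume x: "x \<in> L" and y: "y \<in> L" and nx: "x \<noteq> zL" and ny: "y \<noteq> zL" and e: "mulL x y = zL"
  obtain x' where x': "x' \<in> L" "mulL x x' = uL" using inv x nx by blast
  have "y = mulL (mulL x x') y" using x' mul_u y by simp
  also have "\<dots> = mulL x' (mulL x y)" by (metis mul_assoc mul_comm x x' y)
  also have "\<dots> = zL" using e mul_z2 x' by simp
  finally show False using ny by simp
qed

lemma p_nz: "p k \<noteq> zL"
proof
  assume "p k = zL"
  then have "mulL (p k) (p (-k)) = zL" using mul_z p_in by simp
  then show False using p_mul[of k "-k"] p_0 zu by simp
qed

lemma le_cancel: "m \<in> L \<Longrightarrow> m \<noteq> zL \<Longrightarrow> x \<in> L \<Longrightarrow> y \<in> L \<Longrightarrow> le (mulL m x) (mulL m y) \<Longrightarrow> le x y"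
proof -
  assume m: "m \<in> L" "m \<noteq> zL" and x: "x \<in> L" and y: "y \<in> L" and l: "le (mulL m x) (mulL m y)"
  obtain m' where m': "m' \<in> L" "mulL m m' = uL" using inv m by blast
  have "le (mulL m' (mulL m x)) (mulL m' (mulL m y))" using le_mul l m' m x y mul_cl by blast
  moreover have "\<And>w. w \<in> L \<Longrightarrow> mulL m' (mulL m w) = w"
    by (metis m'(1) m'(2) m(1) mul_assoc mul_comm mul_u)
  ultimately show ?thesis using x y by simp
qed


definition S :: "('b \<Rightarrow> 'a) \<Rightarrow> 'b list \<Rightarrow> 'a" where "S a is = foldr addL (map a is) zL"

lemma S_in: "(\<And>i. i \<in> set is \<Longrightarrow> a i \<in> L) \<Longrightarrow> S a is \<in> L"
  by (induction "is") (auto simp: S_def z add_cl)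

lemma S_ge: "(\<And>i. i \<in> set is \<Longrightarrow> a i \<in> L) \<Longrightarrow> i \<in> set is \<Longrightarrow> le (a i) (S a is)"
proof (induction "is")
  case Nil then show ?case by simp
next
  case (Cons j js)
  have sj: "S a (j # js) = addL (a j) (S a js)" by (simp add: S_def)
  have inL: "S a js \<in> L" by (rule S_in) (use Cons.prems in auto)
  show ?case
  proof (cases "i = j")
    case True then show ?thesis using sj le_add1 inL Cons.prems by simp
  next
    case False
    then have "le (a i) (S a js)" using Cons by simp
    moreover have "a i \<in> L" "a j \<in> L" using Cons.prems by auto
    moreover have "le (S a js) (S a (j # js))" using sj le_add2 inL \<open>a j \<in> L\<close> by simp
    ultimately show ?thesis using le_trans inL sj add_cl by metis
  qed
qed

lemma S_le: "(\<And>i. i \<in> set is \<Longrightarrow> a i \<in> L) \<Longrightarrow> x \<in> L \<Longrightarrow> (\<And>i. i \<in> set is \<Longrightarrow> le (a i) x) \<Longrightarrow> le (S a is) x"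
proof (induction "is")
  case Nil then show ?case by (simp add: S_def le_z)
next
  case (Cons j js)
  have "S a (j # js) = addL (a j) (S a js)" by (simp add: S_def)
  moreover have "S a js \<in> L" by (rule S_in) (use Cons.prems in auto)
  moreover have "le (S a js) x" using Cons by simp
  ultimately show ?case using Cons.prems le_addI by simp
qed

lemma S_mono: "(\<And>i. i \<in> set is \<Longrightarrow> a i \<in> L) \<Longrightarrow> (\<And>i. i \<in> set is \<Longrightarrow> b i \<in> L) \<Longrightarrow>
   (\<And>i. i \<in> set is \<Longrightarrow> le (a i) (b i)) \<Longrightarrow> le (S a is) (S b is)"
proof (induction "is")
  case Nil then show ?case by (simp add: S_def le_refl z)
next
  case (Cons j js)
  have "S a (j # js) = addL (a j) (S a js)" "S b (j # js) = addL (b j) (S b js)" by (simp_all add: S_def)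
  moreover have "S a js \<in> L" by (rule S_in) (use Cons.prems in auto)
  moreover have "S b js \<in> L" by (rule S_in) (use Cons.prems in auto)
  moreover have "le (S a js) (S b js)" using Cons by simp
  ultimately show ?case using Cons.prems le_addmono by simp
qed

lemma S_mul: "m \<in> L \<Longrightarrow> (\<And>i. i \<in> set is \<Longrightarrow> a i \<in> L) \<Longrightarrow> mulL m (S a is) = S (\<lambda>i. mulL m (a i)) is"
proof (induction "is")
  case Nil then show ?case by (simp add: S_def mul_z2)
next
  case (Cons j js)
  have "S a (j # js) = addL (a j) (S a js)" "S (\<lambda>i. mulL m (a i)) (j # js) = addL (mulL m (a j)) (S (\<lambda>i. mulL m (a i)) js)" by (simp_all add: S_def)
  moreover have "S a js \<in> L" by (rule S_in) (use Cons.prems in auto)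
  ultimately show ?case using Cons distr by simp
qed

lemma S_cong: "(\<And>i. i \<in> set is \<Longrightarrow> a i = b i) \<Longrightarrow> S a is = S b is"
  unfolding S_def by (metis map_eq_conv)

lemma lc_S: "length cs = length gs \<Longrightarrow>
   lin_comb addL mulL zL f cs gs = S (\<lambda>i. mulL (f (cs!i)) (gs!i)) [0..<length gs]"
proof -
  assume l: "length cs = length gs"
  have "zip cs gs = map (\<lambda>i. (cs!i, gs!i)) [0..<length gs]"
    using l by (intro nth_equalityI) auto
  then show ?thesis unfolding lin_comb_def S_def by (simp add: foldr_map o_def)
qed


abbreviation lc where "lc cs gs \<equiv> lin_comb addL mulL zL f cs gs"

lemma nth_L: "set gs \<subseteq> L \<Longrightarrow> i < length gs \<Longrightarrow> gs ! i \<in> L"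
  using nth_mem by blast

lemma pattern_le:
  assumes lc: "length cs = length gs" and ld: "length ds = length gs" and gsL: "set gs \<subseteq> L"
    and pat: "\<forall>i<length gs. (cs!i = None) = (ds!i = None)"
  shows "\<exists>K. le (lc cs gs) (mulL (p K) (lc ds gs))"
proof -
  define n where "n = length gs"
  define K where "K = Max ((\<lambda>i. the (cs!i) - the (ds!i)) ` {..<n} \<union> {0})"
  have Kge: "the (cs!i) - the (ds!i) \<le> K" if "i < n" for i
    unfolding K_def using that by (intro Max_ge) auto
  have gi: "gs ! i \<in> L" if "i < n" for i using gsL that n_def nth_L by blast
  have trm: "le (mulL (f (cs!i)) (gs!i)) (mulL (p K) (mulL (f (ds!i)) (gs!i)))" if i: "i < n" for i
  proof (cases "cs!i = None")
    case True
    then show ?thesis using le_z mul_cl p_in f_in gi[OF i] f_None mul_z by simp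
  next
    case False
    then obtain a where a: "cs!i = Some a" by auto
    obtain b where b: "ds!i = Some b" using pat False i n_def by auto
    have "a \<le> K + b" using Kge[OF i] a b by simp
    then have "le (p a) (p (K + b))" by (rule p_mono)
    then have "le (mulL (gs!i) (p a)) (mulL (gs!i) (p (K + b)))" using le_mul gi[OF i] p_in by blast
    moreover have "mulL (p K) (mulL (f (ds!i)) (gs!i)) = mulL (gs!i) (p (K + b))"
      using b p_mul gi[OF i] p_in mul_assoc mul_comm p_def by metis
    moreover have "mulL (f (cs!i)) (gs!i) = mulL (gs!i) (p a)"
      using a gi[OF i] p_in mul_comm p_def by metis
    ultimately show ?thesis by simp
  qed
  have "lc cs gs = S (\<lambda>i. mulL (f (cs!i)) (gs!i)) [0..<n]" using lc_S lc n_def by simp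
  moreover have "mulL (p K) (lc ds gs) = S (\<lambda>i. mulL (p K) (mulL (f (ds!i)) (gs!i))) [0..<n]"
    unfolding lc_S[OF ld] n_def[symmetric] by (rule S_mul) (use p_in f_in mul_cl gi in auto)
  moreover have "le (S (\<lambda>i. mulL (f (cs!i)) (gs!i)) [0..<n]) (S (\<lambda>i. mulL (p K) (mulL (f (ds!i)) (gs!i))) [0..<n])"
    by (rule S_mono) (use trm gi f_in p_in mul_cl in auto)
  ultimately show ?thesis by metis
qed


lemma strong_unit:
  assumes gsL: "set gs \<subseteq> L"
    and rep: "\<forall>x\<in>L. \<exists>cs. length cs = length gs \<and> x = lc cs gs"
    and y: "y \<in> L"
  shows "\<exists>k. le y (p k)"
proof (rule ccontr)
  assume nk: "\<not> (\<exists>k. le y (p k))"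
  define c where "c = addL uL y"
  have cL: "c \<in> L" using c_def add_cl u y by simp
  have uc: "le uL c" using c_def le_add1 u y by simp
  have yc: "le y c" using c_def le_add2 u y by simp
  have cnz: "c \<noteq> zL"
  proof
    assume "c = zL"
    then have "addL uL zL = zL" using uc le_def by simp
    then show False using add_comm add_z u z zu by metis
  qed
  have nc: "\<not> le c (p k)" for k using nk yc le_trans y cL p_in by blast
  define pw where "pw m = (mulL c ^^ m) uL" for m
  have pwL: "pw m \<in> L" for m by (induction m) (auto simp: pw_def u mul_cl cL)
  have pwnz: "pw m \<noteq> zL" for m by (induction m) (auto simp: pw_def zu[symmetric] mul_nz cL cnz pwL[unfolded pw_def])
  have pwadd: "pw (d + m) = mulL (pw d) (pw m)" for d m
  proof (induction d)
    case 0 then show ?case by (simp add: pw_def mul_u pwL[unfolded pw_def])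
  next
    case (Suc d)
    have "pw (Suc d + m) = mulL c (pw (d + m))" by (simp add: pw_def)
    also have "\<dots> = mulL (mulL c (pw d)) (pw m)" using Suc mul_assoc cL pwL by simp
    finally show ?case by (simp add: pw_def)
  qed
  have upw: "le uL (pw d)" for d
  proof (induction d)
    case 0 then show ?case by (simp add: pw_def le_refl u)
  next
    case (Suc d)
    have "le (mulL (pw d) uL) (mulL (pw d) c)" using le_mul pwL u cL uc by blast
    moreover have "mulL (pw d) uL = pw d" using mul_comm[OF pwL u] mul_u[OF pwL] by simp
    moreover have "mulL (pw d) c = pw (Suc d)" using mul_comm[OF pwL cL] by (simp add: pw_def)
    ultimately have "le (pw d) (pw (Suc d))" by simp
    then show ?case using le_trans[OF u pwL pwL Suc] by blast
  qed
  have cpw: "le c (pw d)" if "d \<ge> 1" for d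
  proof -
    define e where "e = d - 1"
    have d: "d = Suc e" using that e_def by simp
    have "le (mulL c uL) (mulL c (pw e))" using le_mul[OF cL u pwL upw] .
    moreover have "mulL c uL = c" using mul_comm[OF cL u] mul_u[OF cL] by simp
    moreover have "mulL c (pw e) = pw d" using d by (simp add: pw_def)
    ultimately show ?thesis by simp
  qed
  have "\<forall>m. \<exists>cs. length cs = length gs \<and> pw m = lc cs gs" using rep pwL by blast
  from choice[OF this] obtain rp where rp: "\<And>m. length (rp m) = length gs \<and> pw m = lc (rp m) gs"
    by blast
  define pat where "pat m = map (\<lambda>x. x = None) (rp m)" for m
  have "range pat \<subseteq> {xs. set xs \<subseteq> UNIV \<and> length xs = length gs}"
    using rp by (auto simp: pat_def)
  then have "finite (range pat)"
    using finite_subset finite_lists_length_eq[OF finite_UNIV, of "length gs"] by blast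
  then have "\<not> inj pat" using finite_imageD infinite_UNIV_nat by blast
  then obtain m1 m2 where mm: "m1 \<noteq> m2" "pat m1 = pat m2" unfolding inj_def by blast
  have contra: False if lt: "a < b" and pe: "pat a = pat b" for a b
  proof -
    have "\<forall>i<length gs. (rp b ! i = None) = (rp a ! i = None)"
    proof (intro allI impI)
      fix i assume i: "i < length gs"
      have "pat a ! i = (rp a ! i = None)" using i rp[of a] by (simp add: pat_def)
      moreover have "pat b ! i = (rp b ! i = None)" using i rp[of b] by (simp add: pat_def)
      ultimately show "(rp b ! i = None) = (rp a ! i = None)" using pe by simp
    qed
    from pattern_le[OF conjunct1[OF rp[of b]] conjunct1[OF rp[of a]] gsL this]
    obtain K where K: "le (pw b) (mulL (p K) (pw a))" using rp by auto
    define d where "d = b - a"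
    have "pw b = mulL (pw a) (pw d)" using pwadd[of d a] d_def lt mul_comm pwL by simp
    moreover have "mulL (p K) (pw a) = mulL (pw a) (p K)" using mul_comm p_in pwL by simp
    ultimately have "le (mulL (pw a) (pw d)) (mulL (pw a) (p K))" using K by simp
    then have "le (pw d) (p K)" using le_cancel[OF pwL pwnz pwL p_in] by blast
    moreover have "le c (pw d)" using cpw d_def lt by simp
    ultimately show False using nc le_trans[OF cL pwL p_in] by blast
  qed
  show False
  proof (cases "m1 < m2")
    case True then show ?thesis using contra mm by blast
  next
    case False then have "m2 < m1" using mm by simp
    then show ?thesis using contra[of m2 m1] mm by simp
  qed
qed


lemma E_pair:
  assumes gsL: "set gs \<subseteq> L"
    and rep: "\<forall>x\<in>L. \<exists>cs. length cs = length gs \<and> x = lc cs gs"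
    and aL: "a \<in> L" and bL: "b \<in> L"
  shows "\<exists>k. \<forall>k'\<ge>k. (a \<noteq> zL \<longrightarrow> b \<noteq> zL \<longrightarrow> le b (mulL (p k') a))"
proof (cases "a = zL")
  case True then show ?thesis by simp
next
  case False
  obtain a' where a': "a' \<in> L" "mulL a a' = uL" using inv[OF aL False] by blast
  have yL: "mulL b a' \<in> L" using mul_cl bL a' by simp
  obtain k where k: "le (mulL b a') (p k)" using strong_unit[OF gsL rep yL] by blast
  have "le (mulL a (mulL b a')) (mulL a (p k))" using le_mul[OF aL yL p_in k] .
  moreover have "mulL a (mulL b a') = b"
  proof -
    have "mulL a (mulL b a') = mulL (mulL b a') a" using mul_comm[OF aL yL] .
    also have "\<dots> = mulL b (mulL a' a)" using mul_assoc[OF bL a'(1) aL] .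
    also have "\<dots> = mulL b uL" using mul_comm[OF a'(1) aL] a'(2) by simp
    also have "\<dots> = b" using mul_comm[OF bL u] mul_u[OF bL] by simp
    finally show ?thesis .
  qed
  ultimately have b1: "le b (mulL a (p k))" by simp
  show ?thesis
  proof (intro exI allI impI)
    fix k' assume "k \<le> k'"
    then have "le (mulL a (p k)) (mulL a (p k'))" using le_mul[OF aL p_in p_in p_mono] by blast
    then have "le b (mulL a (p k'))" using le_trans[OF bL _ _ b1] mul_cl aL p_in by blast
    then show "le b (mulL (p k') a)" using mul_comm[OF aL p_in] by simp
  qed
qed

lemma fin_bound: "finite A \<Longrightarrow> (\<forall>x\<in>A. \<exists>k::int. \<forall>k'\<ge>k. P k' x) \<Longrightarrow> \<exists>k. \<forall>k'\<ge>k. \<forall>x\<in>A. P k' x"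
proof (induction A rule: finite_induct)
  case empty then show ?case by simp
next
  case (insert x F)
  obtain k1 where k1: "\<forall>k'\<ge>k1. P k' x" using insert.prems by blast
  obtain k2 where k2: "\<forall>k'\<ge>k2. \<forall>x\<in>F. P k' x" using insert by blast
  show ?case by (rule exI[of _ "max k1 k2"]) (use k1 k2 in auto)
qed

lemma E_ex:
  assumes gsL: "set gs \<subseteq> L"
    and rep: "\<forall>x\<in>L. \<exists>cs. length cs = length gs \<and> x = lc cs gs"
  shows "\<exists>E\<ge>0. \<forall>a\<in>set gs. \<forall>b\<in>set gs. a \<noteq> zL \<longrightarrow> b \<noteq> zL \<longrightarrow> le b (mulL (p E) a)"
proof -
  have "\<forall>x\<in>set gs \<times> set gs. \<exists>k. \<forall>k'\<ge>k. (\<lambda>k' (a,b). a \<noteq> zL \<longrightarrow> b \<noteq> zL \<longrightarrow> le b (mulL (p k') a)) k' x"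
    using E_pair[OF gsL rep] gsL by auto
  from fin_bound[OF _ this] obtain k where
    k: "\<forall>k'\<ge>k. \<forall>x\<in>set gs \<times> set gs. (\<lambda>k' (a,b). a \<noteq> zL \<longrightarrow> b \<noteq> zL \<longrightarrow> le b (mulL (p k') a)) k' x"
    by blast
  show ?thesis
    by (rule exI[of _ "max k 0"]) (use k in auto)
qed

lemma U_zmax: "units_of_sf zmax_carrier zmax_mul zmax_one = range Some"
proof (intro set_eqI iffI)
  fix x assume "x \<in> units_of_sf zmax_carrier zmax_mul zmax_one"
  then show "x \<in> range Some" unfolding units_of_sf_def zmax_one_def by (cases x) auto
next
  fix x :: zmax assume "x \<in> range Some"
  then obtain a where "x = Some a" by auto
  then have "zmax_mul x (Some (-a)) = zmax_one" by (simp add: zmax_one_def)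
  then show "x \<in> units_of_sf zmax_carrier zmax_mul zmax_one"
    unfolding units_of_sf_def zmax_carrier_def by blast
qed

definition coset where "coset z = (\<lambda>k. mulL z (f k)) ` units_of_sf zmax_carrier zmax_mul zmax_one"

lemma coset_p: "coset z = range (\<lambda>k. mulL z (p k))"
  unfolding coset_def U_zmax p_def by (simp add: image_image)

lemma coset_shift:
  assumes zL: "z \<in> L" shows "coset (mulL (p M) z) = coset z"
proof -
  have e: "mulL (mulL (p M) z) (p k) = mulL z (p (M + k))" for k
  proof -
    have "mulL (mulL (p M) z) (p k) = mulL (mulL z (p M)) (p k)" using mul_comm[OF p_in zL] by simp
    also have "\<dots> = mulL z (mulL (p M) (p k))" using mul_assoc[OF zL p_in p_in] .
    finally show ?thesis using p_mul by simp
  qed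
  show ?thesis unfolding coset_p e
  proof (intro set_eqI iffI)
    fix w assume "w \<in> range (\<lambda>k. mulL z (p (M + k)))"
    then show "w \<in> range (\<lambda>k. mulL z (p k))" by auto
  next
    fix w assume "w \<in> range (\<lambda>k. mulL z (p k))"
    then obtain k where "w = mulL z (p k)" by auto
    then have "w = mulL z (p (M + (k - M)))" by simp
    then show "w \<in> range (\<lambda>k. mulL z (p (M + k)))" by blast
  qed
qed


lemma unit_rep:
  assumes gsL: "set gs \<subseteq> L"
    and rep: "\<forall>x\<in>L. \<exists>cs. length cs = length gs \<and> x = lc cs gs"
    and E0: "E \<ge> 0"
    and Ep: "\<forall>a\<in>set gs. \<forall>b\<in>set gs. a \<noteq> zL \<longrightarrow> b \<noteq> zL \<longrightarrow> le b (mulL (p E) a)"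
    and xL: "x \<in> L" and xnz: "x \<noteq> zL"
  shows "\<exists>ds M. length ds = length gs \<and> set ds \<subseteq> insert None (Some ` {-E..0}) \<and>
            x = mulL (p M) (lc ds gs)"
proof -
  define n where "n = length gs"
  obtain cs where cs: "length cs = n" "x = lc cs gs" using rep xL n_def by blast
  define trm where "trm i = mulL (f (cs!i)) (gs!i)" for i
  have gi: "gs ! i \<in> L" if "i < n" for i using gsL that n_def nth_L by blast
  have trmL: "trm i \<in> L" if "i < n" for i using trm_def mul_cl f_in gi that by simp
  have xS: "x = S trm [0..<n]" unfolding trm_def[abs_def] using cs lc_S n_def by simp
  define I where "I = {i. i < n \<and> cs!i \<noteq> None \<and> gs!i \<noteq> zL}"
  have trm0: "trm i = zL" if "i < n" "i \<notin> I" for i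
  proof (cases "cs!i = None")
    case True then show ?thesis using trm_def f_None mul_z gi that by simp
  next
    case False then have "gs!i = zL" using that I_def by simp
    then show ?thesis using trm_def mul_z2 f_in by simp
  qed
  have Ine: "I \<noteq> {}"
  proof
    assume "I = {}"
    then have "le (S trm [0..<n]) zL" using trm0 trmL z le_refl by (intro S_le) auto
    then have "x = zL" using xS le_antisym[OF xL z] le_z[OF xL] by simp
    then show False using xnz by simp
  qed
  have Ifin: "finite I" unfolding I_def by simp
  define kk where "kk i = the (cs!i)" for i
  have csI: "cs!i = Some (kk i)" if "i \<in> I" for i using that I_def kk_def by auto
  define M where "M = Max (kk ` I)"
  have "M \<in> kk ` I" unfolding M_def using Ifin Ine by (intro Max_in) auto
  then obtain i0 where i0: "i0 \<in> I" "kk i0 = M" by auto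
  have kkM: "kk i \<le> M" if "i \<in> I" for i using Max_ge Ifin that M_def by simp
  define ds where "ds = map (\<lambda>i. if i \<in> I then Some (max (kk i) (M - E) - M) else None) [0..<n]"
  have lds: "length ds = length gs" using ds_def n_def by simp
  have dsi: "ds ! i = (if i \<in> I then Some (max (kk i) (M - E) - M) else None)" if "i < n" for i
    using that ds_def by simp
  have setds: "set ds \<subseteq> insert None (Some ` {-E..0})"
    unfolding ds_def using kkM E0 by auto
  define tt where "tt i = (if i \<in> I then mulL (p (max (kk i) (M - E))) (gs!i) else zL)" for i
  have ttL: "tt i \<in> L" if "i < n" for i using tt_def mul_cl p_in gi z that by simp
  have eq1: "mulL (p M) (mulL (f (ds!i)) (gs!i)) = tt i" if i: "i < n" for i
  proof (cases "i \<in> I")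
    case True
    have "mulL (p M) (mulL (f (ds!i)) (gs!i)) = mulL (mulL (p M) (p (max (kk i) (M - E) - M))) (gs!i)"
      using dsi[OF i] True p_def mul_assoc[OF p_in p_in gi[OF i]] by simp
    also have "\<dots> = mulL (p (max (kk i) (M - E))) (gs!i)" using p_mul[of M "max (kk i) (M - E) - M"] by simp
    finally show ?thesis using True tt_def by simp
  next
    case False
    then show ?thesis using dsi[OF i] tt_def f_None mul_z[OF gi[OF i]] mul_z2[OF p_in] by simp
  qed
  have zS: "mulL (p M) (lc ds gs) = S tt [0..<n]"
  proof -
    have "mulL (p M) (lc ds gs) = S (\<lambda>i. mulL (p M) (mulL (f (ds!i)) (gs!i))) [0..<n]"
      unfolding lc_S[OF lds] n_def[symmetric] by (rule S_mul) (use p_in f_in mul_cl gi in auto)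
    also have "\<dots> = S tt [0..<n]" using eq1 by (intro S_cong) auto
    finally show ?thesis .
  qed
  have le1: "le x (S tt [0..<n])"
    unfolding xS
  proof (rule S_mono)
    fix i assume "i \<in> set [0..<n]"
    then have i: "i < n" by simp
    show "trm i \<in> L" using trmL i .
    show "tt i \<in> L" using ttL i .
    show "le (trm i) (tt i)"
    proof (cases "i \<in> I")
      case True
      have "le (p (kk i)) (p (max (kk i) (M - E)))" by (rule p_mono) simp
      then have "le (mulL (gs!i) (p (kk i))) (mulL (gs!i) (p (max (kk i) (M - E))))"
        using le_mul[OF gi[OF i] p_in p_in] by blast
      then show ?thesis using True tt_def trm_def csI p_def mul_comm[OF gi[OF i] p_in] by simp
    next
      case False
      then show ?thesis using trm0 i tt_def le_refl z by simp
    qed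
  qed
  have tle: "le (trm i) x" if "i < n" for i
    unfolding xS by (rule S_ge) (use trmL that in auto)
  have le2: "le (S tt [0..<n]) x"
  proof (rule S_le)
    fix i assume "i \<in> set [0..<n]"
    then have i: "i < n" by simp
    show "tt i \<in> L" using ttL i .
    show "le (tt i) x"
    proof (cases "i \<in> I")
      case False then show ?thesis using tt_def le_z xL by simp
    next
      case True
      show ?thesis
      proof (cases "kk i \<ge> M - E")
        case True
        then have "tt i = trm i" using \<open>i \<in> I\<close> tt_def trm_def csI p_def by simp
        then show ?thesis using tle i by simp
      next
        case False
        have i0n: "i0 < n" using i0 I_def by simp
        have nz: "gs!i0 \<noteq> zL" "gs!i \<noteq> zL" using i0 \<open>i \<in> I\<close> I_def by auto
        have "le (gs!i) (mulL (p E) (gs!i0))"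
          using Ep nth_mem i i0n n_def nz by blast
        then have "le (mulL (p (M - E)) (gs!i)) (mulL (p (M - E)) (mulL (p E) (gs!i0)))"
          using le_mul[OF p_in gi[OF i] mul_cl[OF p_in gi[OF i0n]]] by blast
        moreover have "mulL (p (M - E)) (mulL (p E) (gs!i0)) = trm i0"
        proof -
          have "mulL (p (M - E)) (mulL (p E) (gs!i0)) = mulL (mulL (p (M - E)) (p E)) (gs!i0)"
            using mul_assoc[OF p_in p_in gi[OF i0n]] by simp
          also have "\<dots> = mulL (p M) (gs!i0)" using p_mul[of "M - E" E] by simp
          finally show ?thesis using trm_def csI[OF i0(1)] i0(2) p_def by simp
        qed
        moreover have "tt i = mulL (p (M - E)) (gs!i)" using \<open>i \<in> I\<close> False tt_def by simp
        ultimately have "le (tt i) (trm i0)" by simp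
        then show ?thesis using le_trans[OF ttL[OF i] trmL[OF i0n] xL] tle[OF i0n] by blast
      qed
    qed
  qed (use xL in auto)
  have "S tt [0..<n] \<in> L" by (rule S_in) (use ttL in auto)
  then have "x = mulL (p M) (lc ds gs)"
    using le_antisym[OF xL _ le1 le2] zS by simp
  then show ?thesis using lds setds by blast
qed


lemma lc_in: "set gs \<subseteq> L \<Longrightarrow> length ds = length gs \<Longrightarrow> lc ds gs \<in> L"
  unfolding lc_S by (rule S_in) (use f_in mul_cl nth_L in auto)

lemma fin_main:
  assumes gsL: "set gs \<subseteq> L"
    and rep: "\<forall>x\<in>L. \<exists>cs. length cs = length gs \<and> x = lc cs gs"
  shows "finite (unit_cosets zmax_carrier zmax_mul zmax_one L mulL uL f)"
proof -
  obtain E where E0: "E \<ge> 0" and Ep: "\<forall>a\<in>set gs. \<forall>b\<in>set gs. a \<noteq> zL \<longrightarrow> b \<noteq> zL \<longrightarrow> le b (mulL (p E) a)"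
    using E_ex[OF gsL rep] by blast
  define D where "D = {ds. set ds \<subseteq> insert None (Some ` {-E..0}) \<and> length ds = length gs}"
  have Dfin: "finite D" unfolding D_def by (rule finite_lists_length_eq) simp
  have "unit_cosets zmax_carrier zmax_mul zmax_one L mulL uL f \<subseteq> coset ` (\<lambda>ds. lc ds gs) ` D"
  proof
    fix C assume "C \<in> unit_cosets zmax_carrier zmax_mul zmax_one L mulL uL f"
    then obtain x where x: "x \<in> units_of_sf L mulL uL" and C: "C = coset x"
      unfolding unit_cosets_def coset_def by blast
    have xL: "x \<in> L" using x unfolding units_of_sf_def by simp
    have xnz: "x \<noteq> zL"
    proof
      assume "x = zL"
      then obtain y where "y \<in> L" "mulL zL y = uL" using x unfolding units_of_sf_def by auto
      then show False using mul_z zu by simp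
    qed
    obtain ds M where ds: "length ds = length gs" "set ds \<subseteq> insert None (Some ` {-E..0})"
      "x = mulL (p M) (lc ds gs)" using unit_rep[OF gsL rep E0 Ep xL xnz] by blast
    have "C = coset (lc ds gs)" using C ds(3) coset_shift lc_in[OF gsL ds(1)] by simp
    moreover have "ds \<in> D" using ds D_def by simp
    ultimately show "C \<in> coset ` (\<lambda>ds. lc ds gs) ` D" by blast
  qed
  then show ?thesis using Dfin finite_subset by blast
qed

end

theorem mainTheorem3:
  fixes L :: "'a set" and addL mulL :: "'a \<Rightarrow> 'a \<Rightarrow> 'a" and zL uL :: 'a
    and f :: "zmax \<Rightarrow> 'a"
  assumes "semifield L addL mulL zL uL"
    and "sf_hom zmax_carrier zmax_add zmax_mul zmax_zero zmax_one L addL mulL zL uL f"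
    and "inj_on f zmax_carrier"
    and "fin_gen_semimodule zmax_carrier L addL mulL zL f"
  shows "finite (unit_cosets zmax_carrier zmax_mul zmax_one L mulL uL f)"
proof -
  interpret isf L addL mulL zL uL f using assms(1,2) by unfold_locales
  obtain gs where gs: "set gs \<subseteq> L"
    "\<forall>x\<in>L. \<exists>cs. length cs = length gs \<and> set cs \<subseteq> zmax_carrier \<and> x = lin_comb addL mulL zL f cs gs"
    using assms(4) unfolding fin_gen_semimodule_def by blast
  have "\<forall>x\<in>L. \<exists>cs. length cs = length gs \<and> x = lin_comb addL mulL zL f cs gs"
    using gs(2) by blast
  then show ?thesis using fin_main[OF gs(1)] by blast
qed

end
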